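(* Let $N\ge1$ and $H\ge1$ be constants. Let $z_1,\dots,z_n$ be numbers with $0\le z_k\le H$, and define $Z_0,Z_1,\dots,Z_n$ by $1\le Z_0\le 2H-1$ and $Z_k=Z_{k-1}+z_k$ for $k\ge1$. Then for all $n\ge1$, \[ \sum_{k=1}^n\frac{z_k}{\sqrt{kN+Z_{k-1}}}\le\sum_{k=1}^n\sqrt{\frac{(k+1)H-1}{kN+(k+1)H-1}}\,\frac{z_k}{\sqrt{Z_{k-1}}}\le\sqrt{\frac{2H-1}{N+2H-1}}\sum_{k=1}^n\frac{z_k}{\sqrt{Z_{k-1}}}. \] *)

theory Defs
  imports Complex_Main
begin

end

theory Submission
  imports Defs
begin

lemma term1:
  fixes x c a z :: real
  assumes "0 < x" "x \<le> a" "0 < c" "0 \<le> z"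
  shows "z / sqrt (c + x) \<le> sqrt (a / (c + a)) * (z / sqrt x)"
proof -
  have "1 / (c + x) \<le> a / ((c + a) * x)"
  proof -
    have "c * x \<le> c * a" using assms by (intro mult_left_mono) auto
    hence "(c + a) * x \<le> a * (c + x)" by (simp add: algebra_simps)
    thus ?thesis using assms by (simp add: divide_simps)
  qed
  hence "sqrt (1 / (c + x)) \<le> sqrt (a / ((c + a) * x))" by simp
  hence "1 / sqrt (c + x) \<le> sqrt (a / (c + a)) * (1 / sqrt x)"
    by (simp add: real_sqrt_divide real_sqrt_mult)
  from mult_left_mono[OF this assms(4)] show ?thesis by (simp add: ac_simps)
qed

lemma term2:
  fixes N H :: real and k :: nat
  assumes "N \<ge> 1" "H \<ge> 1" "k \<ge> 1"
  shows "((real k + 1) * H - 1) / (real k * N + (real k + 1) * H - 1)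
         \<le> (2 * H - 1) / (N + 2 * H - 1)"
proof -
  have k: "real k \<ge> 1" using assms by simp
  have q1: "real k * N \<ge> 1" using k assms(1) by (metis mult_mono' mult_1 zero_le_one)
  have q2: "(real k + 1) * H \<ge> 1 * 1" using k assms(2) by (intro mult_mono) auto
  have p1: "real k * N + (real k + 1) * H - 1 > 0" using q1 q2 by linarith
  have p2: "N + 2 * H - 1 > 0" using assms by simp
  have "(real k - 1) * (H - 1) \<ge> 0" using k assms by simp
  hence "((real k + 1) * H - 1) \<le> (2 * H - 1) * real k" by (simp add: algebra_simps)
  hence "((real k + 1) * H - 1) * N \<le> ((2 * H - 1) * real k) * N"
    using assms by (intro mult_right_mono) auto
  hence "((real k + 1) * H - 1) * N \<le> (2 * H - 1) * (real k * N)" by (simp add: mult.assoc)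
  hence "((real k + 1) * H - 1) * (N + 2 * H - 1) \<le> (2 * H - 1) * (real k * N + (real k + 1) * H - 1)"
    by (simp add: algebra_simps)
  thus ?thesis using p1 p2 by (simp add: divide_simps)
qed

theorem corollary6:
  fixes N H :: real and z Z :: "nat \<Rightarrow> real" and n :: nat
  assumes "N \<ge> 1" and "H \<ge> 1"
    and "\<And>k. 1 \<le> k \<Longrightarrow> k \<le> n \<Longrightarrow> 0 \<le> z k \<and> z k \<le> H"
    and "1 \<le> Z 0" and "Z 0 \<le> 2 * H - 1"
    and "\<And>k. 1 \<le> k \<Longrightarrow> k \<le> n \<Longrightarrow> Z k = Z (k - 1) + z k"
    and "n \<ge> 1"
  shows "(\<Sum>k=1..n. z k / sqrt (real k * N + Z (k - 1)))
           \<le> (\<Sum>k=1..n. sqrt (((real k + 1) * H - 1) / (real k * N + (real k + 1) * H - 1))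
                           * (z k / sqrt (Z (k - 1))))
       \<and> (\<Sum>k=1..n. sqrt (((real k + 1) * H - 1) / (real k * N + (real k + 1) * H - 1))
                           * (z k / sqrt (Z (k - 1))))
           \<le> sqrt ((2 * H - 1) / (N + 2 * H - 1)) * (\<Sum>k=1..n. z k / sqrt (Z (k - 1)))"
proof -
  have bnd: "m < n \<Longrightarrow> 1 \<le> Z m \<and> Z m \<le> (real m + 2) * H - 1" for m
  proof (induction m)
    case 0 thus ?case using assms by simp
  next
    case (Suc m)
    have e: "Z (Suc m) = Z m + z (Suc m)" using assms(6)[of "Suc m"] Suc by simp
    have "0 \<le> z (Suc m) \<and> z (Suc m) \<le> H" using assms(3)[of "Suc m"] Suc by simp
    thus ?case using Suc e by (simp add: algebra_simps)
  qed
  have A: "z k / sqrt (real k * N + Z (k - 1))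
      \<le> sqrt (((real k + 1) * H - 1) / (real k * N + (real k + 1) * H - 1)) * (z k / sqrt (Z (k - 1)))"
    if k: "k \<in> {1..n}" for k
  proof -
    have b: "1 \<le> Z (k-1) \<and> Z (k-1) \<le> (real (k-1) + 2) * H - 1" using bnd[of "k-1"] k by force
    have "real (k-1) + 2 = real k + 1" using k by auto
    hence b2: "Z (k-1) \<le> (real k + 1) * H - 1" using b by (simp add: add.commute)
    have "real k * N + (real k + 1) * H - 1 = real k * N + ((real k + 1) * H - 1)" by simp
    moreover have "z k / sqrt (real k * N + Z (k - 1))
      \<le> sqrt (((real k + 1) * H - 1) / (real k * N + ((real k + 1) * H - 1))) * (z k / sqrt (Z (k - 1)))"
      apply (rule term1) using b b2 k assms(1) assms(3)[of k] by auto
    ultimately show ?thesis by (simp only: add_diff_eq)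
  qed
  have B: "sqrt (((real k + 1) * H - 1) / (real k * N + (real k + 1) * H - 1)) * (z k / sqrt (Z (k - 1)))
      \<le> sqrt ((2 * H - 1) / (N + 2 * H - 1)) * (z k / sqrt (Z (k - 1)))"
    if k: "k \<in> {1..n}" for k
  proof (rule mult_right_mono)
    show "sqrt (((real k + 1) * H - 1) / (real k * N + (real k + 1) * H - 1)) \<le> sqrt ((2 * H - 1) / (N + 2 * H - 1))"
      using term2[OF assms(1,2), of k] k by simp
    have "k - 1 < n" using k by auto
    hence "0 \<le> Z (k - 1)" using bnd[of "k-1"] by simp
    thus "0 \<le> z k / sqrt (Z (k - 1))" using assms(3)[of k] k by simp
  qed
  have SA: "(\<Sum>k=1..n. z k / sqrt (real k * N + Z (k - 1)))
           \<le> (\<Sum>k=1..n. sqrt (((real k + 1) * H - 1) / (real k * N + (real k + 1) * H - 1))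
                           * (z k / sqrt (Z (k - 1))))"
    by (rule sum_mono) (rule A)
  have SB: "(\<Sum>k=1..n. sqrt (((real k + 1) * H - 1) / (real k * N + (real k + 1) * H - 1))
                           * (z k / sqrt (Z (k - 1))))
           \<le> (\<Sum>k=1..n. sqrt ((2 * H - 1) / (N + 2 * H - 1)) * (z k / sqrt (Z (k - 1))))"
    by (rule sum_mono) (rule B)
  show ?thesis using SA SB by (simp only: sum_distrib_left)
qed

end
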